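(* For all positive integers $N$ and $t$, letting $n=N(2t+2)$, there exist an unweighted directed graph $G=(V,E)$ with $n$ vertices and a subset $S\subseteq V$ with $|S|=N=\Theta(n/t)$ such that $\mathrm{outecc}_G(s)=t+1$ for every $s\in S$, and every subgraph $H=(V,E')$, $E'\subseteq E$, satisfying $\mathrm{outecc}_H(s)<2\,\mathrm{outecc}_G(s)$ for all $s\in S$ contains at least $N^2$ edges, i.e. $\Omega(n^2/t^2)$ edges.
   Context: $d_G(u,v)$ is the directed shortest-path distance and $\mathrm{outecc}_G(x)=\max_{y\in V}d_G(x,y)$. *)

theory Defs
  imports Main "HOL-Library.Extended_Nat"
begin

text \<open>Unweighted directed graphs are given by a finite vertex set V and an edge
relation E \<subseteq> V \<times> V (no self-loops).\<close>

definition dist :: "('a \<times> 'a) set \<Rightarrow> 'a \<Rightarrow> 'a \<Rightarrow> enat" where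
  "dist E u v = (INF k \<in> {k. (u, v) \<in> E ^^ k}. enat k)"

definition outecc :: "'a set \<Rightarrow> ('a \<times> 'a) set \<Rightarrow> 'a \<Rightarrow> enat" where
  "outecc V E x = (SUP y \<in> V. dist E x y)"

end

theory Submission
  imports Defs "HOL-Library.Nat_Bijection"
begin

definition Pe :: "nat \<Rightarrow> nat \<Rightarrow> nat \<Rightarrow> nat \<Rightarrow> nat \<Rightarrow> bool" where
  "Pe t a x b y \<longleftrightarrow> (x = 0 \<and> (y = 1 \<or> y = t+1)) \<or>
     (a = b \<and> ((1 \<le> x \<and> x < t \<and> y = Suc x) \<or> (x = t \<and> y = 0) \<or> (t+1 \<le> x \<and> x < 2*t+1 \<and> y = Suc x)))"

definition E0 :: "nat \<Rightarrow> nat \<Rightarrow> ((nat\<times>nat)\<times>(nat\<times>nat)) set" where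
  "E0 N t = {((a,x),(b,y)). a<N \<and> b<N \<and> x < 2*t+2 \<and> y < 2*t+2 \<and> Pe t a x b y}"

definition fpot :: "nat \<Rightarrow> nat \<Rightarrow> nat set \<Rightarrow> nat \<times> nat \<Rightarrow> nat" where
  "fpot t i J p = (case p of (k,m) \<Rightarrow>
     (if m = 0 then (if k = i then 0 else t+1) else if m \<le> t then m else if k \<in> J then m+1 else m - t))"

lemma pot_lemma:
  assumes "\<forall>(u,v)\<in>R. F v \<le> F u + (1::nat)"
  shows "(x,y)\<in>R^^k \<Longrightarrow> F y \<le> F x + k"
proof (induction k arbitrary: y)
  case 0 then show ?case by simp
next
  case (Suc k)
  from Suc.prems obtain z where "(x,z)\<in>R^^k" "(z,y)\<in>R" by (rule relpow_Suc_E)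
  with Suc.IH assms show ?case by fastforce
qed

lemma fpot_edge:
  assumes "((a,x),(b,y)) \<in> E0 N t" "t > 0"
    and "\<not> (a = i \<and> x = 0 \<and> b \<in> J \<and> y = t+1)"
  shows "fpot t i J (b,y) \<le> fpot t i J (a,x) + 1"
  using assms unfolding E0_def Pe_def fpot_def by auto

lemma dist_le: "(u,v)\<in>R^^k \<Longrightarrow> dist R u v \<le> enat k"
  unfolding dist_def by (rule INF_lower) simp

lemma dist_ge: "(\<And>k. (u,v)\<in>R^^k \<Longrightarrow> L \<le> k) \<Longrightarrow> enat L \<le> dist R u v"
  unfolding dist_def by (rule INF_greatest) simp

lemma outecc_le: "(\<And>y. y\<in>V \<Longrightarrow> dist R x y \<le> c) \<Longrightarrow> outecc V R x \<le> c"
  unfolding outecc_def by (rule SUP_least)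

lemma outecc_ge: "y \<in> V \<Longrightarrow> dist R x y \<le> outecc V R x"
  unfolding outecc_def by (rule SUP_upper)

lemma map_relpow:
  "(x,y) \<in> R^^k \<Longrightarrow> (g x, g y) \<in> (map_prod g g ` R)^^k"
proof (induction k arbitrary: y)
  case 0 then show ?case by simp
next
  case (Suc k)
  from Suc.prems obtain z where "(x,z)\<in>R^^k" "(z,y)\<in>R" by (rule relpow_Suc_E)
  then show ?case using Suc.IH by (metis map_prod_simp rev_image_eqI relpow_Suc_I)
qed

lemma edge1: "(x,y)\<in>(R::('a\<times>'a) set) \<Longrightarrow> (x,y) \<in> R^^Suc 0"
  by simp

lemma walk_q:
  assumes "a < N" "k < N" "t > 0"
  shows "1 \<le> m \<Longrightarrow> m \<le> t \<Longrightarrow> ((a,0),(k,m)) \<in> (E0 N t)^^m"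
proof (induction m)
  case 0 then show ?case by simp
next
  case (Suc m)
  show ?case
  proof (cases "m = 0")
    case True
    have "((a,0),(k,1)) \<in> E0 N t" using assms unfolding E0_def Pe_def by auto
    then show ?thesis using True by (simp add: edge1)
  next
    case False
    then have "((a,0),(k,m)) \<in> (E0 N t)^^m" using Suc by auto
    moreover have "((k,m),(k,Suc m)) \<in> E0 N t" using assms Suc.prems False unfolding E0_def Pe_def by auto
    ultimately show ?thesis by (rule relpow_Suc_I)
  qed
qed

lemma walk_p:
  assumes "a < N" "j < N" "t > 0"
  shows "r \<le> t \<Longrightarrow> ((a,0),(j,t+1+r)) \<in> (E0 N t)^^Suc r"
proof (induction r)
  case 0
  have "((a,0),(j,t+1)) \<in> E0 N t" using assms unfolding E0_def Pe_def by auto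
  then show ?case by (simp add: edge1)
next
  case (Suc r)
  then have "((a,0),(j,t+1+r)) \<in> (E0 N t)^^Suc r" by auto
  moreover have "((j,t+1+r),(j,t+1+Suc r)) \<in> E0 N t" using assms Suc.prems unfolding E0_def Pe_def by auto
  ultimately show ?case by (rule relpow_Suc_I)
qed

lemma walk_s:
  assumes "a < N" "k < N" "t > 0"
  shows "((a,0),(k,0)) \<in> (E0 N t)^^Suc t"
proof -
  have "((a,0),(k,t)) \<in> (E0 N t)^^t" using walk_q[OF assms] assms(3) by auto
  moreover have "((k,t),(k,0)) \<in> E0 N t" using assms unfolding E0_def Pe_def by auto
  ultimately show ?thesis by (rule relpow_Suc_I)
qed

lemma reach_all:
  assumes "a < N" "k < N" "m < 2*t+2" "t > 0"
  shows "\<exists>n\<le>t+1. ((a,0),(k,m)) \<in> (E0 N t)^^n"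
proof -
  consider "m = 0 \<and> k = a" | "m = 0 \<and> k \<noteq> a" | "1 \<le> m \<and> m \<le> t" | "t+1 \<le> m" by linarith
  then show ?thesis
  proof cases
    case 1 then show ?thesis by (intro exI[of _ 0]) auto
  next
    case 2 then show ?thesis using walk_s[OF assms(1,2,4)] by (intro exI[of _ "Suc t"]) auto
  next
    case 3 then show ?thesis using walk_q[OF assms(1,2,4)] by (intro exI[of _ m]) auto
  next
    case 4
    define r where "r = m - (t+1)"
    have r: "m = t+1+r" "r \<le> t" using 4 assms(3) unfolding r_def by auto
    then show ?thesis using walk_p[OF assms(1,2,4) r(2)] by (intro exI[of _ "Suc r"]) auto
  qed
qed

lemma lowerE:
  assumes "R \<subseteq> map_prod prod_encode prod_encode ` E0 N t" "t > 0"
    and "\<And>a x b y. ((a,x),(b,y)) \<in> E0 N t \<Longrightarrow> (prod_encode (a,x), prod_encode (b,y)) \<in> R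
            \<Longrightarrow> \<not> (a = i \<and> x = 0 \<and> b \<in> J \<and> y = t+1)"
    and "(prod_encode p0, prod_encode q0) \<in> R^^k"
  shows "fpot t i J q0 \<le> fpot t i J p0 + k"
proof -
  let ?F = "\<lambda>v. fpot t i J (prod_decode v)"
  have "\<forall>(u,v)\<in>R. ?F v \<le> ?F u + 1"
  proof (clarify)
    fix u v assume uv: "(u,v) \<in> R"
    then obtain a x b y where e: "((a,x),(b,y)) \<in> E0 N t" "u = prod_encode (a,x)" "v = prod_encode (b,y)"
      using assms(1) by fastforce
    have "\<not> (a = i \<and> x = 0 \<and> b \<in> J \<and> y = t+1)" using assms(3)[OF e(1)] uv e by simp
    then show "?F v \<le> ?F u + 1" using fpot_edge[OF e(1) assms(2)] e by simp
  qed
  from pot_lemma[OF this assms(4)] show ?thesis by simp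
qed

lemma E0_sub: "E0 N t \<subseteq> ({..<N} \<times> {..<2*t+2}) \<times> ({..<N} \<times> {..<2*t+2})"
  unfolding E0_def by auto

theorem theorem7p2:
  fixes N t :: nat
  assumes "N > 0" and "t > 0"
  shows "\<exists>(V :: nat set) (E :: (nat \<times> nat) set) S.
           finite V \<and> card V = N * (2 * t + 2) \<and> E \<subseteq> V \<times> V \<and> (\<forall>v. (v, v) \<notin> E) \<and>
           S \<subseteq> V \<and> card S = N \<and>
           (\<forall>s\<in>S. outecc V E s = enat (t + 1)) \<and>
           (\<forall>E' \<subseteq> E. (\<forall>s\<in>S. outecc V E' s < 2 * outecc V E s) \<longrightarrow> card E' \<ge> N ^ 2)"
proof -
  let ?g = "prod_encode"
  define V0 where "V0 = {..<N} \<times> {..<2*t+2}"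
  define V where "V = ?g ` V0"
  define E where "E = map_prod ?g ?g ` E0 N t"
  define S where "S = (\<lambda>a. ?g (a,0)) ` {..<N}"
  have inj: "inj ?g" by (rule inj_prod_encode)
  have finV: "finite V" unfolding V_def V0_def by simp
  have cardV: "card V = N * (2*t+2)" unfolding V_def V0_def
    by (simp add: card_image[OF inj_prod_encode])
  have EV: "E \<subseteq> V \<times> V" unfolding E_def V_def using E0_sub[of N t] unfolding V0_def by fastforce
  have finE: "finite E" using EV finV by (meson finite_SigmaI finite_subset)
  have noloop: "\<forall>v. (v,v) \<notin> E"
  proof (intro allI notI)
    fix v assume "(v,v) \<in> E"
    then obtain p q where pq: "(p,q) \<in> E0 N t" "?g p = v" "?g q = v" unfolding E_def by auto
    then have "p = q" using inj by (metis injD)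
    then show False using pq(1) assms(2) unfolding E0_def Pe_def by auto
  qed
  have SV: "S \<subseteq> V" unfolding S_def V_def V0_def by auto
  have cardS: "card S = N" unfolding S_def
    by (subst card_image) (auto intro!: inj_onI dest: injD[OF inj])
  have ecc: "outecc V E (?g (a,0)) = enat (t+1)" if a: "a < N" for a
  proof (rule antisym)
    show "outecc V E (?g (a,0)) \<le> enat (t+1)"
    proof (rule outecc_le)
      fix y assume "y \<in> V"
      then obtain k m where km: "k < N" "m < 2*t+2" "y = ?g (k,m)" unfolding V_def V0_def by auto
      obtain n where n: "n \<le> t+1" "((a,0),(k,m)) \<in> (E0 N t)^^n" using reach_all[OF a km(1,2) assms(2)] by auto
      have "(?g (a,0), y) \<in> E^^n" unfolding E_def km(3) by (rule map_relpow[OF n(2)])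
      then have "dist E (?g (a,0)) y \<le> enat n" by (rule dist_le)
      also have "\<dots> \<le> enat (t+1)" using n(1) by simp
      finally show "dist E (?g (a,0)) y \<le> enat (t+1)" .
    qed
  next
    have zV: "?g (a, 2*t+1) \<in> V" unfolding V_def V0_def using a by auto
    have "enat (t+1) \<le> dist E (?g (a,0)) (?g (a, 2*t+1))"
    proof (rule dist_ge)
      fix k assume k: "(?g (a,0), ?g (a, 2*t+1)) \<in> E^^k"
      have "fpot t a {} (a, 2*t+1) \<le> fpot t a {} (a,0) + k"
        by (rule lowerE[OF _ assms(2) _ k]) (auto simp: E_def)
      then show "t+1 \<le> k" unfolding fpot_def by simp
    qed
    also have "\<dots> \<le> outecc V E (?g (a,0))" by (rule outecc_ge[OF zV])
    finally show "enat (t+1) \<le> outecc V E (?g (a,0))" .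
  qed
  have eccS: "\<forall>s\<in>S. outecc V E s = enat (t + 1)" unfolding S_def using ecc by auto
  have main: "card E' \<ge> N^2" if E': "E' \<subseteq> E" "\<forall>s\<in>S. outecc V E' s < 2 * outecc V E s" for E'
  proof -
    have sub: "(\<lambda>(a,j). (?g (a,0), ?g (j,t+1))) ` ({..<N} \<times> {..<N}) \<subseteq> E'"
    proof (clarify)
      fix a j assume aj: "a < N" "j < N"
      show "(?g (a,0), ?g (j,t+1)) \<in> E'"
      proof (rule ccontr)
        assume miss: "(?g (a,0), ?g (j,t+1)) \<notin> E'"
        have zV: "?g (j, 2*t+1) \<in> V" unfolding V_def V0_def using aj by auto
        have "enat (2*t+2) \<le> dist E' (?g (a,0)) (?g (j, 2*t+1))"
        proof (rule dist_ge)
          fix k assume k: "(?g (a,0), ?g (j, 2*t+1)) \<in> E'^^k"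
          have "fpot t a {j} (j, 2*t+1) \<le> fpot t a {j} (a,0) + k"
          proof (rule lowerE[OF _ assms(2) _ k])
            show "E' \<subseteq> map_prod ?g ?g ` E0 N t" using E'(1) unfolding E_def .
          next
            fix a' x b y assume "(?g (a',x), ?g (b,y)) \<in> E'"
            then show "\<not> (a' = a \<and> x = 0 \<and> b \<in> {j} \<and> y = t+1)" using miss by auto
          qed
          then show "2*t+2 \<le> k" unfolding fpot_def by simp
        qed
        also have "\<dots> \<le> outecc V E' (?g (a,0))" by (rule outecc_ge[OF zV])
        finally have ge: "enat (2*t+2) \<le> outecc V E' (?g (a,0))" .
        have "?g (a,0) \<in> S" unfolding S_def using aj by auto
        then have "outecc V E' (?g (a,0)) < 2 * enat (t+1)" using E'(2) ecc[OF aj(1)] by auto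
        also have "2 * enat (t+1) = enat (2*t+2)" by (simp add: numeral_eq_enat)
        finally show False using ge by simp
      qed
    qed
    have inj2: "inj_on (\<lambda>(a,j). (?g (a,0), ?g (j,t+1))) ({..<N} \<times> {..<N})"
      by (auto intro!: inj_onI dest: injD[OF inj])
    have "N^2 = card ((\<lambda>(a,j). (?g (a,0), ?g (j,t+1))) ` ({..<N} \<times> {..<N}))"
      using card_image[OF inj2] by (simp add: power2_eq_square card_cartesian_product)
    also have "\<dots> \<le> card E'" using card_mono[OF finite_subset[OF E'(1) finE] sub] .
    finally show ?thesis .
  qed
  show ?thesis
    apply (rule exI[of _ V], rule exI[of _ E], rule exI[of _ S])
    using finV cardV EV noloop SV cardS eccS main by blast
qed

end
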